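(* Let $M \ge 1$ be a power of $2$ and let $\mathbf{a}, \mathbf{b} \in \mathbb{C}^{M}$ be such that the vector $\begin{bmatrix}\mathbf{a}\\ \mathbf{b}\end{bmatrix} \in \mathbb{C}^{2M}$ is nonzero. Suppose that $\begin{bmatrix}\mathbf{a}\\ \mathbf{b}\end{bmatrix}$ is an eigenvector of $\mathbf{T}_{4M,1}(\mathbf{h})$ for every $\mathbf{h} \in \mathbb{C}^{4M}$. Then for every $\mathbf{g} \in \mathbb{C}^{8M}$, both vectors $$\frac{1}{\sqrt{2}}\begin{bmatrix}\mathbf{a}\\ \mathbf{b}\\ \mathbf{b}\\ -\mathbf{a}\end{bmatrix} \quad\text{and}\quad \frac{1}{\sqrt{2}}\begin{bmatrix}\mathbf{a}\\ \mathbf{b}\\ -\mathbf{b}\\ \mathbf{a}\end{bmatrix} \in \mathbb{C}^{4M}$$ are eigenvectors of $\mathbf{T}_{8M,1}(\mathbf{g})$.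
   Context: For a complex matrix $A$, $A^*$ denotes its entrywise complex conjugate and $A^\dagger$ its conjugate transpose. For $K$ a power of $2$ and $\mathbf{h} = (h_1,\dots,h_{2K})^T \in \mathbb{C}^{2K}$, write $\mathbf{h}_{K,1} = (h_1,\dots,h_K)^T$ and $\mathbf{h}_{K,2} = (h_{K+1},\dots,h_{2K})^T$. The "equivalent channel" matrices $\mathcal{E}_{K,1}(\mathbf{h}), \mathcal{E}_{K,2}(\mathbf{h})$ (of size $K \times (K/2)$, for $\mathbf{h} \in \mathbb{C}^K$, $K \ge 2$ a power of $2$) are defined recursively by $$\mathcal{E}_{2,1}(h_1,h_2) = \begin{bmatrix} h_1 \\ h_2^* \end{bmatrix},\qquad \mathcal{E}_{2,2}(h_1,h_2) = \begin{bmatrix} h_2 \\ -h_1^* \end{bmatrix},$$ and, for $\mathbf{h} \in \mathbb{C}^{2K}$, $$\mathcal{E}_{2K,1}(\mathbf{h}) = \begin{bmatrix} \mathcal{E}_{K,1}(\mathbf{h}_{K,1}) & \mathcal{E}_{K,2}(\mathbf{h}_{K,2}) \\ \mathcal{E}_{K,1}^*(\mathbf{h}_{K,2}) & -\mathcal{E}_{K,2}^*(\mathbf{h}_{K,1}) \end{bmatrix},\qquad \mathcal{E}_{2K,2}(\mathbf{h}) = \begin{bmatrix} -\mathcal{E}_{K,2}(\mathbf{h}_{K,1}) & -\mathcal{E}_{K,1}(\mathbf{h}_{K,2}) \\ -\mathcal{E}_{K,2}^*(\mathbf{h}_{K,2}) & \mathcal{E}_{K,1}^*(\mathbf{h}_{K,1})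 \end{bmatrix}.$$ (These arise from the recursively defined linear space-time code $G_1[s]=s_1$, $G_{2K}[\mathbf{s}] = \begin{bmatrix} G_K[\mathbf{s}_{K,1}] & G_K[\mathbf{s}_{K,2}] \\ -G_K[\mathbf{s}_{K,2}^*] & G_K[\mathbf{s}_{K,1}^*]\end{bmatrix}$ by splitting the symbols into two partitions.) For $\mathbf{h} \in \mathbb{C}^K$ define the $(K/2)\times(K/2)$ Hermitian matrix $\mathbf{T}_{K,1}(\mathbf{h}) = \mathcal{E}_{K,1}^\dagger(\mathbf{h})\,\mathcal{E}_{K,1}(\mathbf{h})$. *)

theory Defs
  imports "Jordan_Normal_Form.Schur_Decomposition" "Jordan_Normal_Form.Char_Poly"
begin

text \<open>Equivalent channel matrices, indexed by level n, where K = 2^(n+1).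
  Elev n h = (E_{K,1}(h), E_{K,2}(h)) for h of length K.  Indices are 0-based.\<close>

fun Elev :: "nat \<Rightarrow> complex vec \<Rightarrow> complex mat \<times> complex mat" where
  "Elev 0 h =
     (mat_of_cols_list 2 [[h $ 0, cnj (h $ 1)]],
      mat_of_cols_list 2 [[h $ 1, - cnj (h $ 0)]])"
| "Elev (Suc n) h =
     (let K = 2 ^ (n + 1);
          h1 = vec K (\<lambda>i. h $ i);
          h2 = vec K (\<lambda>i. h $ (K + i));
          (A1, A2) = Elev n h1;
          (B1, B2) = Elev n h2
      in (four_block_mat A1 B2 (map_mat cnj B1) (- map_mat cnj A2),
          four_block_mat (- A2) (- B1) (- map_mat cnj B2) (map_mat cnj A1)))"

definition Ecal1 :: "nat \<Rightarrow> complex vec \<Rightarrow> complex mat" where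
  "Ecal1 K h = fst (Elev (THE n. K = 2 ^ (n + 1)) h)"

definition Ecal2 :: "nat \<Rightarrow> complex vec \<Rightarrow> complex mat" where
  "Ecal2 K h = snd (Elev (THE n. K = 2 ^ (n + 1)) h)"

definition T1 :: "nat \<Rightarrow> complex vec \<Rightarrow> complex mat" where
  "T1 K h = mat_adjoint (Ecal1 K h) * Ecal1 K h"

end

theory Submission
  imports Defs
begin

abbreviation cm :: "complex mat \<Rightarrow> complex mat" where "cm A \<equiv> map_mat cnj A"

lemma adj_alt: "mat_adjoint (A::complex mat) = transpose_mat (cm A)"
  by (rule eq_matI, auto simp: mat_adjoint_def mat_of_rows_def cols_def)

lemma cm_mult: "A \<in> carrier_mat n k \<Longrightarrow> B \<in> carrier_mat k l \<Longrightarrow> cm (A * B) = cm A * cm B"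
  by (rule eq_matI, auto simp: scalar_prod_def)

lemma cm_add: "A \<in> carrier_mat n k \<Longrightarrow> B \<in> carrier_mat n k \<Longrightarrow> cm (A + B) = cm A + cm B"
  by (rule eq_matI, auto)

lemma cm_uminus: "cm (- A) = - cm A"
  by (rule eq_matI, auto)

lemma cm_smult: "cm (c \<cdot>\<^sub>m A) = cnj c \<cdot>\<^sub>m cm A"
  by (rule eq_matI, auto)

lemma cm_cm[simp]: "cm (cm A) = A"
  by (rule eq_matI, auto)

lemma cm_one[simp]: "cm (1\<^sub>m n) = 1\<^sub>m n"
  by (rule eq_matI) simp_all

lemma cm_zero[simp]: "cm (0\<^sub>m n k) = 0\<^sub>m n k"
  by (rule eq_matI) simp_all

lemma adj_dims[simp]: "dim_row (mat_adjoint (A::complex mat)) = dim_col A" "dim_col (mat_adjoint A) = dim_row A"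
  by (simp_all add: adj_alt)

lemma adj_carrier[simp]: "(mat_adjoint A \<in> carrier_mat n k) = ((A::complex mat) \<in> carrier_mat k n)"
  unfolding carrier_mat_def by (simp add: conj_commute)

lemma adj_mult: "A \<in> carrier_mat n k \<Longrightarrow> B \<in> carrier_mat k l \<Longrightarrow>
   mat_adjoint (A * B) = mat_adjoint B * mat_adjoint (A::complex mat)"
  by (simp add: adj_alt cm_mult transpose_mult[of _ n k _ l])

lemma adj_add: "A \<in> carrier_mat n k \<Longrightarrow> B \<in> carrier_mat n k \<Longrightarrow>
   mat_adjoint (A + B) = mat_adjoint A + mat_adjoint (B::complex mat)"
  by (rule eq_matI, auto simp: adj_alt)

lemma adj_uminus: "mat_adjoint (- A) = - mat_adjoint (A::complex mat)"
  by (rule eq_matI, auto simp: adj_alt)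

lemma adj_smult: "mat_adjoint (c \<cdot>\<^sub>m A) = cnj c \<cdot>\<^sub>m mat_adjoint (A::complex mat)"
  by (rule eq_matI, auto simp: adj_alt)

lemma adj_adj[simp]: "mat_adjoint (mat_adjoint (A::complex mat)) = A"
  by (rule eq_matI, auto simp: adj_alt)

lemma adj_four: "A \<in> carrier_mat nr1 nc1 \<Longrightarrow> B \<in> carrier_mat nr1 nc2 \<Longrightarrow>
  C \<in> carrier_mat nr2 nc1 \<Longrightarrow> D \<in> carrier_mat nr2 nc2 \<Longrightarrow>
  mat_adjoint (four_block_mat A B C D) = four_block_mat (mat_adjoint A) (mat_adjoint C) (mat_adjoint B) (mat_adjoint (D::complex mat))"
  by (rule eq_matI, auto simp: adj_alt)

lemma cm_four: "A \<in> carrier_mat nr1 nc1 \<Longrightarrow> B \<in> carrier_mat nr1 nc2 \<Longrightarrow>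
  C \<in> carrier_mat nr2 nc1 \<Longrightarrow> D \<in> carrier_mat nr2 nc2 \<Longrightarrow>
  cm (four_block_mat A B C D) = four_block_mat (cm A) (cm B) (cm C) (cm D)"
  by (rule eq_matI, auto)

lemma uminus_four: "A \<in> carrier_mat nr1 nc1 \<Longrightarrow> B \<in> carrier_mat nr1 nc2 \<Longrightarrow>
  C \<in> carrier_mat nr2 nc1 \<Longrightarrow> D \<in> carrier_mat nr2 nc2 \<Longrightarrow>
  - (four_block_mat A B C D) = four_block_mat (- A) (- B) (- C) (- (D::complex mat))"
  by (rule eq_matI, auto)

definition E1 where "E1 n h = fst (Elev n h)"
definition E2 where "E2 n h = snd (Elev n h)"
definition lo :: "nat \<Rightarrow> complex vec \<Rightarrow> complex vec" where "lo k h = vec k (\<lambda>i. h $ i)"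
definition hi :: "nat \<Rightarrow> complex vec \<Rightarrow> complex vec" where "hi k h = vec k (\<lambda>i. h $ (k + i))"

lemma Elev_Suc: "Elev (Suc n) h =
   (four_block_mat (E1 n (lo (2^(n+1)) h)) (E2 n (hi (2^(n+1)) h)) (cm (E1 n (hi (2^(n+1)) h))) (- cm (E2 n (lo (2^(n+1)) h))),
    four_block_mat (- E2 n (lo (2^(n+1)) h)) (- E1 n (hi (2^(n+1)) h)) (- cm (E2 n (hi (2^(n+1)) h))) (cm (E1 n (lo (2^(n+1)) h))))"
  unfolding Elev.simps Let_def E1_def E2_def lo_def hi_def by (simp add: case_prod_beta)

lemma E1_Suc: "E1 (Suc n) h = four_block_mat (E1 n (lo (2^(n+1)) h)) (E2 n (hi (2^(n+1)) h)) (cm (E1 n (hi (2^(n+1)) h))) (- cm (E2 n (lo (2^(n+1)) h)))"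
  by (simp only: E1_def[of "Suc n"] Elev_Suc fst_conv)
lemma E2_Suc: "E2 (Suc n) h = four_block_mat (- E2 n (lo (2^(n+1)) h)) (- E1 n (hi (2^(n+1)) h)) (- cm (E2 n (hi (2^(n+1)) h))) (cm (E1 n (lo (2^(n+1)) h)))"
  by (simp only: E2_def[of "Suc n"] Elev_Suc snd_conv)

lemma E_carrier0: "E1 0 h \<in> carrier_mat 2 1 \<and> E2 0 h \<in> carrier_mat 2 1"
  unfolding E1_def E2_def Elev.simps(1) fst_conv snd_conv
  unfolding mat_of_cols_list_def carrier_mat_def by simp

lemma E_carrier: "E1 n h \<in> carrier_mat (2^(n+1)) (2^n) \<and> E2 n h \<in> carrier_mat (2^(n+1)) (2^n)"
proof (induction n arbitrary: h)
  case 0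
  then show ?case using E_carrier0 by simp
next
  case (Suc n)
  have e: "2^(Suc n + 1) = 2^(n+1) + (2^(n+1)::nat)" "2^(Suc n) = 2^n + (2^n::nat)" by simp_all
  show ?case unfolding E1_Suc E2_Suc e
    apply (intro conjI four_block_carrier_mat)
    using Suc.IH by auto
qed

lemma E1_carrier[simp]: "E1 n h \<in> carrier_mat (2^(n+1)) (2^n)" using E_carrier by blast
lemma E2_carrier[simp]: "E2 n h \<in> carrier_mat (2^(n+1)) (2^n)" using E_carrier by blast


lemma lo_carrier[simp]: "lo k h \<in> carrier_vec k" by (simp add: lo_def)
lemma hi_carrier[simp]: "hi k h \<in> carrier_vec k" by (simp add: hi_def)

lemma lo_add: "x \<in> carrier_vec (2*k) \<Longrightarrow> y \<in> carrier_vec (2*k) \<Longrightarrow> lo k (x + y) = lo k x + lo k y"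
  by (rule eq_vecI) (auto simp: lo_def)
lemma hi_add: "x \<in> carrier_vec (2*k) \<Longrightarrow> y \<in> carrier_vec (2*k) \<Longrightarrow> hi k (x + y) = hi k x + hi k y"
  by (rule eq_vecI) (auto simp: hi_def)
lemma lo_smult: "x \<in> carrier_vec (2*k) \<Longrightarrow> lo k (c \<cdot>\<^sub>v x) = c \<cdot>\<^sub>v lo k x"
  by (rule eq_vecI) (auto simp: lo_def)
lemma hi_smult: "x \<in> carrier_vec (2*k) \<Longrightarrow> hi k (c \<cdot>\<^sub>v x) = c \<cdot>\<^sub>v hi k x"
  by (rule eq_vecI) (auto simp: hi_def)

lemma E_dims[simp]: "dim_row (E1 n h) = 2^(n+1)" "dim_col (E1 n h) = 2^n" "dim_row (E2 n h) = 2^(n+1)" "dim_col (E2 n h) = 2^n"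
  using E1_carrier[of n h] E2_carrier[of n h] by (auto simp del: E1_carrier E2_carrier)

lemma cm_add': "dim_row A = dim_row B \<Longrightarrow> dim_col A = dim_col B \<Longrightarrow> cm (A + B) = cm A + cm B"
  by (rule eq_matI) auto
lemma neg_add': "dim_row A = dim_row B \<Longrightarrow> dim_col A = dim_col B \<Longrightarrow> - (A + B) = - A + - (B :: complex mat)"
  by (rule eq_matI) auto

lemma neg_add_mat: "A \<in> carrier_mat n k \<Longrightarrow> B \<in> carrier_mat n k \<Longrightarrow> - (A + B) = - A + - (B :: complex mat)"
  by (rule eq_matI) auto
lemma neg_smult_mat: "- (c \<cdot>\<^sub>m A) = c \<cdot>\<^sub>m (- (A :: complex mat))"
  by (rule eq_matI) auto

lemma E_add: "x \<in> carrier_vec (2^(n+1)) \<Longrightarrow> y \<in> carrier_vec (2^(n+1)) \<Longrightarrow>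
  E1 n (x + y) = E1 n x + E1 n y \<and> E2 n (x + y) = E2 n x + E2 n y"
proof (induction n arbitrary: x y)
  case 0
  have x: "dim_vec x = 2" and y: "dim_vec y = 2" using 0 by auto
  show ?case
    unfolding E1_def E2_def Elev.simps(1) fst_conv snd_conv
    apply (intro conjI; rule eq_matI)
    subgoal for i j using x y by (cases i) (auto simp: mat_of_cols_list_def)
    subgoal by (simp add: mat_of_cols_list_def)
    subgoal by (simp add: mat_of_cols_list_def)
    subgoal for i j using x y by (cases i) (auto simp: mat_of_cols_list_def)
    subgoal by (simp add: mat_of_cols_list_def)
    subgoal by (simp add: mat_of_cols_list_def)
    done
next
  case (Suc n)
  let ?K = "2^(n+1) :: nat"
  have x: "x \<in> carrier_vec (2 * ?K)" and y: "y \<in> carrier_vec (2 * ?K)" using Suc.prems by auto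
  note IH = Suc.IH[OF lo_carrier lo_carrier] Suc.IH[OF hi_carrier hi_carrier]
  show ?case
    apply (simp only: E1_Suc E2_Suc lo_add[OF x y] hi_add[OF x y] IH)
    apply (subst (1 2) add_four_block_mat[of _ ?K "2^n" _ "2^n" _ ?K])
    apply (simp_all only: E1_carrier E2_carrier map_carrier_mat uminus_carrier_iff_mat)
    apply (simp add: cm_add' neg_add')
    done
qed

lemma E_smult: "cnj c = c \<Longrightarrow> x \<in> carrier_vec (2^(n+1)) \<Longrightarrow>
  E1 n (c \<cdot>\<^sub>v x) = c \<cdot>\<^sub>m E1 n x \<and> E2 n (c \<cdot>\<^sub>v x) = c \<cdot>\<^sub>m E2 n x"
proof (induction n arbitrary: x)
  case 0
  have x: "dim_vec x = 2" using 0 by auto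
  have c: "cnj c = c" by fact
  show ?case
    unfolding E1_def E2_def Elev.simps(1) fst_conv snd_conv
    apply (intro conjI; rule eq_matI)
    subgoal for i j using x c by (cases i) (auto simp: mat_of_cols_list_def)
    subgoal by (simp add: mat_of_cols_list_def)
    subgoal by (simp add: mat_of_cols_list_def)
    subgoal for i j using x c by (cases i) (auto simp: mat_of_cols_list_def)
    subgoal by (simp add: mat_of_cols_list_def)
    subgoal by (simp add: mat_of_cols_list_def)
    done
next
  case (Suc n)
  let ?K = "2^(n+1) :: nat"
  have x: "x \<in> carrier_vec (2 * ?K)" using Suc.prems by auto
  note IH = Suc.IH[OF Suc.prems(1) lo_carrier] Suc.IH[OF Suc.prems(1) hi_carrier]
  show ?case
    apply (simp only: E1_Suc E2_Suc lo_smult[OF x] hi_smult[OF x] IH)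
    apply (subst (1 2) smult_four_block_mat[of _ ?K "2^n" _ "2^n" _ ?K])
    apply (simp_all only: E1_carrier E2_carrier map_carrier_mat uminus_carrier_iff_mat)
    apply (simp add: cm_smult neg_smult_mat Suc.prems(1))
    done
qed


definition Jm :: "nat \<Rightarrow> complex mat" where
  "Jm k = four_block_mat (0\<^sub>m k k) (1\<^sub>m k) (- 1\<^sub>m k) (0\<^sub>m k k)"

definition rho :: "nat \<Rightarrow> complex vec \<Rightarrow> complex vec" where
  "rho k y = vec (2*k) (\<lambda>i. if i < k then y $ (k + i) else - (y $ (i - k)))"

lemma Jm_carrier[simp]: "Jm k \<in> carrier_mat (2*k) (2*k)"
  unfolding Jm_def by (metis four_block_carrier_mat zero_carrier_mat mult_2)
lemma Jm_dims[simp]: "dim_row (Jm k) = 2*k" "dim_col (Jm k) = 2*k"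
  using Jm_carrier[of k] by (auto simp del: Jm_carrier)

lemma rho_carrier[simp]: "rho k y \<in> carrier_vec (2*k)" by (simp add: rho_def)
lemma lo_rho: "lo k (rho k y) = hi k y"
  by (rule eq_vecI) (auto simp: lo_def hi_def rho_def)
lemma hi_rho: "hi k (rho k y) = (-1) \<cdot>\<^sub>v lo k y"
  by (rule eq_vecI) (auto simp: lo_def hi_def rho_def)

lemma smult_neg1: "(-1) \<cdot>\<^sub>m A = - (A :: complex mat)"
  by (rule eq_matI) auto

lemma cm_four': "dim_row B = dim_row A \<Longrightarrow> dim_row C = dim_row D \<Longrightarrow> dim_col C = dim_col A \<Longrightarrow> dim_col B = dim_col D \<Longrightarrow>
  cm (four_block_mat A B C D) = four_block_mat (cm A) (cm B) (cm C) (cm D)"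
  by (rule eq_matI) auto
lemma uminus_four': "dim_row B = dim_row A \<Longrightarrow> dim_row C = dim_row D \<Longrightarrow> dim_col C = dim_col A \<Longrightarrow> dim_col B = dim_col D \<Longrightarrow>
  - (four_block_mat A B C D) = four_block_mat (- A) (- B) (- C) (- (D :: complex mat))"
  by (rule eq_matI) auto

lemma left_J: assumes "dim_row X = k" "dim_row Y = k" "dim_row Z = k" "dim_row W = k"
   "dim_col Z = dim_col X" "dim_col W = dim_col Y"
 shows "Jm k * four_block_mat X Y Z W = four_block_mat Z W (- X) (- Y)"
proof -
  have c: "X \<in> carrier_mat k (dim_col X)" "Y \<in> carrier_mat k (dim_col Y)"
    "Z \<in> carrier_mat k (dim_col X)" "W \<in> carrier_mat k (dim_col Y)"
    using assms unfolding carrier_mat_def by simp_all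
  have m1: "- X \<in> carrier_mat k (dim_col X)" "- Y \<in> carrier_mat k (dim_col Y)" using c by (simp_all only: uminus_carrier_iff_mat)
  have u1: "- 1\<^sub>m k * X = - X" using assms(1) by simp
  have u2: "- 1\<^sub>m k * Y = - Y" using assms(2) by simp
  show ?thesis unfolding Jm_def
    apply (subst mult_four_block_mat[OF zero_carrier_mat one_carrier_mat uminus_carrier_mat[OF one_carrier_mat] zero_carrier_mat c])
    apply (rule cong_four_block_mat)
    subgoal by (simp only: left_mult_zero_mat[OF c(1)] left_mult_one_mat[OF c(3)] left_add_zero_mat[OF c(3)])
    subgoal by (simp only: left_mult_zero_mat[OF c(2)] left_mult_one_mat[OF c(4)] left_add_zero_mat[OF c(4)])
    subgoal by (simp only: left_mult_zero_mat[OF c(3)] u1 right_add_zero_mat[OF m1(1)])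
    subgoal by (simp only: left_mult_zero_mat[OF c(4)] u2 right_add_zero_mat[OF m1(2)])
    done
qed

lemma right_J: assumes "dim_col X = k" "dim_col Y = k" "dim_col Z = k" "dim_col W = k"
   "dim_row Y = dim_row X" "dim_row W = dim_row Z"
 shows "four_block_mat X Y Z W * Jm k = four_block_mat (- Y) X (- W) Z"
proof -
  have c: "X \<in> carrier_mat (dim_row X) k" "Y \<in> carrier_mat (dim_row X) k"
    "Z \<in> carrier_mat (dim_row Z) k" "W \<in> carrier_mat (dim_row Z) k"
    using assms unfolding carrier_mat_def by simp_all
  have m1: "- Y \<in> carrier_mat (dim_row X) k" "- W \<in> carrier_mat (dim_row Z) k" using c by (simp_all only: uminus_carrier_iff_mat)
  have u1: "Y * - 1\<^sub>m k = - Y" using assms(2) by simp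
  have u2: "W * - 1\<^sub>m k = - W" using assms(4) by simp
  show ?thesis unfolding Jm_def
    apply (subst mult_four_block_mat[OF c zero_carrier_mat one_carrier_mat uminus_carrier_mat[OF one_carrier_mat] zero_carrier_mat])
    apply (rule cong_four_block_mat)
    subgoal by (simp only: right_mult_zero_mat[OF c(1)] u1 left_add_zero_mat[OF m1(1)])
    subgoal by (simp only: right_mult_zero_mat[OF c(2)] right_mult_one_mat[OF c(1)] right_add_zero_mat[OF c(1)])
    subgoal by (simp only: right_mult_zero_mat[OF c(3)] u2 left_add_zero_mat[OF m1(2)])
    subgoal by (simp only: right_mult_zero_mat[OF c(4)] right_mult_one_mat[OF c(3)] right_add_zero_mat[OF c(3)])
    done
qed

lemma JJ: "Jm k * Jm k = - 1\<^sub>m (2*k)"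
  apply (subst (2) Jm_def)
  apply (subst left_J)
  apply (auto)[6]
  unfolding Jm_def by (rule eq_matI) auto

lemma adj_J: "mat_adjoint (Jm k) = - Jm k"
  unfolding Jm_def by (rule eq_matI) (auto simp: adj_alt)

lemma cm_J[simp]: "cm (Jm k) = Jm k"
  unfolding Jm_def by (rule eq_matI) auto

lemma E_neg: "x \<in> carrier_vec (2^(n+1)) \<Longrightarrow> E1 n ((-1) \<cdot>\<^sub>v x) = - E1 n x \<and> E2 n ((-1) \<cdot>\<^sub>v x) = - E2 n x"
  using E_smult[of "-1" x n] by (simp add: smult_neg1)

lemma idA: "E2 (Suc n) y = - (E1 (Suc n) (rho (2^(n+1)) y) * Jm (2^n))"
  unfolding E1_Suc E2_Suc lo_rho hi_rho
  apply (simp only: E_neg[OF lo_carrier])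
  apply (subst right_J)
  apply (simp_all)[6]
  apply (subst uminus_four')
  apply (simp_all add: cm_uminus)
  done

lemma idB: "cm (E1 (Suc n) y) = - (Jm (2^(n+1)) * E1 (Suc n) (rho (2^(n+1)) y))"
  unfolding E1_Suc E2_Suc lo_rho hi_rho
  apply (simp only: E_neg[OF lo_carrier])
  apply (subst left_J)
  apply (simp_all)[6]
  apply (subst uminus_four')
  apply (simp_all)[4]
  apply (subst cm_four')
  apply (simp_all add: cm_uminus)
  done

lemma idC: "cm (E1 (Suc n) (rho (2^(n+1)) y)) = Jm (2^(n+1)) * E1 (Suc n) y"
  unfolding E1_Suc E2_Suc lo_rho hi_rho
  apply (simp only: E_neg[OF lo_carrier])
  apply (subst left_J)
  apply (simp_all)[6]
  apply (subst cm_four')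
  apply (simp_all add: cm_uminus)
  done


lemma smult_mat_vec: "v \<in> carrier_vec (dim_col A) \<Longrightarrow> (c \<cdot>\<^sub>m A) *\<^sub>v v = c \<cdot>\<^sub>v (A *\<^sub>v (v :: complex vec))"
  by (rule eq_vecI) (auto simp: scalar_prod_def sum_distrib_left mult.assoc intro!: sum.cong)

lemma M1g: assumes F: "F \<in> carrier_mat r k" and J: "J \<in> carrier_mat k k" and JJ: "J * J = - 1\<^sub>m k"
  shows "(- (F * J)) * J = (F :: complex mat)"
proof -
  have "(- (F * J)) * J = - ((F * J) * J)" using F J by simp
  also have "(F * J) * J = F * (J * J)" using F J by simp
  also have "F * (J * J) = - F" using F unfolding JJ by simp
  finally show ?thesis by simp
qed

lemma M2g: assumes F1: "F1 \<in> carrier_mat r k" and J: "J \<in> carrier_mat k k" and JJ: "J * J = - 1\<^sub>m k"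
  and cJ: "cm J = J" and J': "J' \<in> carrier_mat r r" and P: "P \<in> carrier_mat r k" and C: "cm F1 = J' * P"
  shows "(- cm (- (F1 * J))) * J = - (J' * P)" and "- cm (- (F1 * J)) = J' * P * J"
proof -
  have "- cm (- (F1 * J)) = cm (F1 * J)" by (simp add: cm_uminus)
  also have "\<dots> = J' * P * J" using F1 J by (simp add: cm_mult[of _ r k _ k] cJ C)
  finally show e: "- cm (- (F1 * J)) = J' * P * J" .
  have "J' * P * J * J = J' * P * (J * J)" using J' P J by (meson assoc_mult_mat mult_carrier_mat)
  also have "\<dots> = - (J' * P)" using J' P unfolding JJ by simp
  finally show "(- cm (- (F1 * J))) * J = - (J' * P)" unfolding e .
qed

lemma M3g: fixes F2 J' :: "complex mat" assumes F2: "F2 \<in> carrier_mat r k" and J': "J' \<in> carrier_mat r r" and JJ: "J' * J' = - 1\<^sub>m r"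
  and aJ: "mat_adjoint J' = - J'"
  shows "mat_adjoint (- (J' * F2)) * J' = - mat_adjoint F2"
proof -
  have "mat_adjoint (- (J' * F2)) = - (mat_adjoint F2 * mat_adjoint J')"
    by (simp only: adj_uminus adj_mult[OF J' F2])
  also have "\<dots> = mat_adjoint F2 * J'" unfolding aJ using F2 J' by simp
  finally have e: "mat_adjoint (- (J' * F2)) = mat_adjoint F2 * J'" .
  have "mat_adjoint F2 * J' * J' = mat_adjoint F2 * (J' * J')" using F2 J' by simp
  also have "\<dots> = - mat_adjoint F2" unfolding JJ using F2 by simp
  finally show ?thesis unfolding e .
qed

lemma M4ag: fixes F2 J :: "complex mat" assumes F2: "F2 \<in> carrier_mat r k" and J: "J \<in> carrier_mat k k" and aJ: "mat_adjoint J = - J"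
  shows "mat_adjoint (- (F2 * J)) = J * mat_adjoint F2"
proof -
  have "mat_adjoint (- (F2 * J)) = - (mat_adjoint J * mat_adjoint F2)"
    by (simp only: adj_uminus adj_mult[OF F2 J])
  also have "\<dots> = J * mat_adjoint F2" unfolding aJ using F2 J by simp
  finally show ?thesis .
qed

lemma M4bg: fixes P J J' :: "complex mat" assumes P: "P \<in> carrier_mat r k" and J: "J \<in> carrier_mat k k" and aJ: "mat_adjoint J = - J"
  and J': "J' \<in> carrier_mat r r" and JJ: "J' * J' = - 1\<^sub>m r" and aJ': "mat_adjoint J' = - J'"
  shows "mat_adjoint (J' * P * J) * J' = - (J * mat_adjoint P)"
proof -
  have "mat_adjoint (J' * P * J) = mat_adjoint J * mat_adjoint (J' * P)"
    by (simp only: adj_mult[OF mult_carrier_mat[OF J' P] J])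
  also have "\<dots> = mat_adjoint J * (mat_adjoint P * mat_adjoint J')"
    by (simp only: adj_mult[OF J' P])
  also have "\<dots> = J * mat_adjoint P * J'" unfolding aJ aJ' using P J J' by simp
  finally have e: "mat_adjoint (J' * P * J) = J * mat_adjoint P * J'" .
  have "J * mat_adjoint P * J' * J' = J * mat_adjoint P * (J' * J')" using P J J'
    by (meson assoc_mult_mat mult_carrier_mat adj_carrier)
  also have "\<dots> = - (J * mat_adjoint P)" unfolding JJ using P J by simp
  finally show ?thesis unfolding e .
qed


lemma vlem1: assumes "a \<in> carrier_vec n" "b \<in> carrier_vec n" "(s::complex) * s = 1"
  shows "- b + s \<cdot>\<^sub>v (- a) = (- s) \<cdot>\<^sub>v (a + s \<cdot>\<^sub>v b)"
proof (rule eq_vecI)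
  fix i assume "i < dim_vec ((- s) \<cdot>\<^sub>v (a + s \<cdot>\<^sub>v b))"
  then have i: "i < n" using assms by simp
  have "- (b $ i) + s * (- (a $ i)) = - s * (a $ i + s * (b $ i))"
    using assms(3) by (simp add: algebra_simps mult.assoc[symmetric])
  then show "(- b + s \<cdot>\<^sub>v (- a)) $ i = ((- s) \<cdot>\<^sub>v (a + s \<cdot>\<^sub>v b)) $ i" using i assms by simp
qed (use assms in simp)

lemma vlem2: assumes "x \<in> carrier_vec n" "y \<in> carrier_vec n"
  shows "x + (- s) \<cdot>\<^sub>v (- y) = x + (s::complex) \<cdot>\<^sub>v y"
  by (rule eq_vecI) (use assms in simp_all)

lemma vlem3: assumes "y1 \<in> carrier_vec n" "y2 \<in> carrier_vec n" "(s::complex) * s = 1"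
  shows "y1 + (- s) \<cdot>\<^sub>v (- y2) = s \<cdot>\<^sub>v (y2 + s \<cdot>\<^sub>v y1)"
proof (rule eq_vecI)
  fix i assume "i < dim_vec (s \<cdot>\<^sub>v (y2 + s \<cdot>\<^sub>v y1))"
  then have i: "i < n" using assms by simp
  have "y1 $ i + (- s) * (- (y2 $ i)) = s * (y2 $ i + s * (y1 $ i))"
    using assms(3) by (simp add: algebra_simps mult.assoc[symmetric])
  then show "(y1 + (- s) \<cdot>\<^sub>v (- y2)) $ i = (s \<cdot>\<^sub>v (y2 + s \<cdot>\<^sub>v y1)) $ i" using i assms by simp
qed (use assms in simp)

lemma smult_append: "c \<cdot>\<^sub>v (a @\<^sub>v b) = (c \<cdot>\<^sub>v a) @\<^sub>v (c \<cdot>\<^sub>v (b :: complex vec))"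
  by (rule eq_vecI) auto

lemma core:
  fixes m :: nat and g v :: "complex vec" and s lam :: complex
  assumes v: "v \<in> carrier_vec (2^(m+1))" and sig: "cnj s = s" "s * s = 1"
  and ev: "(mat_adjoint (E1 (Suc m) (lo (2^(Suc m + 1)) g + s \<cdot>\<^sub>v rho (2^(m+1)) (hi (2^(Suc m + 1)) g)))
           * E1 (Suc m) (lo (2^(Suc m + 1)) g + s \<cdot>\<^sub>v rho (2^(m+1)) (hi (2^(Suc m + 1)) g))) *\<^sub>v v = lam \<cdot>\<^sub>v v"
  shows "(mat_adjoint (E1 (Suc (Suc m)) g) * E1 (Suc (Suc m)) g) *\<^sub>v (v @\<^sub>v (s \<cdot>\<^sub>v (Jm (2^m) *\<^sub>v v)))
       = lam \<cdot>\<^sub>v (v @\<^sub>v (s \<cdot>\<^sub>v (Jm (2^m) *\<^sub>v v)))"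
proof -
  define K where "K = (2::nat)^(m+1)"
  have eK: "2^(Suc m + 1) = 2*K" "2^(Suc m) = K" "2 * 2^m = K" by (simp_all add: K_def)
  define g1 where "g1 = lo (2^(Suc m + 1)) g"
  define g2 where "g2 = hi (2^(Suc m + 1)) g"
  define P where "P = E1 (Suc m) g1"
  define Q where "Q = E2 (Suc m) g1"
  define R where "R = E1 (Suc m) g2"
  define S where "S = E2 (Suc m) g2"
  define F1 where "F1 = E1 (Suc m) (rho K g1)"
  define F2 where "F2 = E1 (Suc m) (rho K g2)"
  define J where "J = Jm (2^m)"
  define J' where "J' = Jm K"
  define H where "H = E1 (Suc m) (g1 + s \<cdot>\<^sub>v rho K g2)"
  have cP: "P \<in> carrier_mat (2*K) K" using E1_carrier[of "Suc m" g1] unfolding P_def eK(1,2) .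
  have cQ: "Q \<in> carrier_mat (2*K) K" using E2_carrier[of "Suc m" g1] unfolding Q_def eK(1,2) .
  have cR: "R \<in> carrier_mat (2*K) K" using E1_carrier[of "Suc m" g2] unfolding R_def eK(1,2) .
  have cS: "S \<in> carrier_mat (2*K) K" using E2_carrier[of "Suc m" g2] unfolding S_def eK(1,2) .
  have cF1: "F1 \<in> carrier_mat (2*K) K" using E1_carrier[of "Suc m" "rho K g1"] unfolding F1_def eK(1,2) .
  have cF2: "F2 \<in> carrier_mat (2*K) K" using E1_carrier[of "Suc m" "rho K g2"] unfolding F2_def eK(1,2) .
  have cH: "H \<in> carrier_mat (2*K) K" using E1_carrier[of "Suc m" "g1 + s \<cdot>\<^sub>v rho K g2"] unfolding H_def eK(1,2) .
  have cJ: "J \<in> carrier_mat K K" unfolding J_def eK(3)[symmetric] by (rule Jm_carrier)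
  have cJ': "J' \<in> carrier_mat (2*K) (2*K)" unfolding J'_def by (rule Jm_carrier)
  have JJ1: "J * J = - 1\<^sub>m K" unfolding J_def eK(3)[symmetric] by (rule JJ)
  have JJ2: "J' * J' = - 1\<^sub>m (2*K)" unfolding J'_def by (rule JJ)
  have aJ: "mat_adjoint J = - J" unfolding J_def by (rule adj_J)
  have aJ': "mat_adjoint J' = - J'" unfolding J'_def by (rule adj_J)
  have cmJ: "cm J = J" unfolding J_def by (rule cm_J)
  have vK: "v \<in> carrier_vec K" using v unfolding K_def .
  have Eg: "E1 (Suc (Suc m)) g = four_block_mat P S (cm R) (- cm Q)"
    unfolding P_def Q_def R_def S_def g1_def g2_def by (rule E1_Suc)
  have g1c: "g1 \<in> carrier_vec (2^(Suc m + 1))" unfolding g1_def by simp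
  have rc: "rho K g2 \<in> carrier_vec (2^(Suc m + 1))" unfolding eK(1) by simp
  have hH: "H = P + s \<cdot>\<^sub>m F2"
  proof -
    have "H = E1 (Suc m) g1 + E1 (Suc m) (s \<cdot>\<^sub>v rho K g2)"
      unfolding H_def using E_add[OF g1c smult_carrier_vec[THEN iffD2, OF rc]] by blast
    also have "E1 (Suc m) (s \<cdot>\<^sub>v rho K g2) = s \<cdot>\<^sub>m F2"
      unfolding F2_def using E_smult[OF sig(1) rc] by blast
    finally show ?thesis unfolding P_def .
  qed
  have fA: "S = - (F2 * J)" unfolding S_def F2_def J_def K_def by (rule idA)
  have fA2: "Q = - (F1 * J)" unfolding Q_def F1_def J_def K_def by (rule idA)
  have fB: "cm R = - (J' * F2)" unfolding R_def F2_def J'_def K_def by (rule idB)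
  have fC: "cm F1 = J' * P" unfolding F1_def P_def J'_def K_def by (rule idC)
  have m1: "S * J = F2" unfolding fA by (rule M1g[OF cF2 cJ JJ1])
  have m2: "(- cm Q) * J = - (J' * P)" unfolding fA2 by (rule M2g(1)[OF cF1 cJ JJ1 cmJ cJ' cP fC])
  have m2': "- cm Q = J' * P * J" unfolding fA2 by (rule M2g(2)[OF cF1 cJ JJ1 cmJ cJ' cP fC])
  have m3: "mat_adjoint (cm R) * J' = - mat_adjoint F2" unfolding fB by (rule M3g[OF cF2 cJ' JJ2 aJ'])
  have m4a: "mat_adjoint S = J * mat_adjoint F2" unfolding fA by (rule M4ag[OF cF2 cJ aJ])
  have m4b: "mat_adjoint (- cm Q) * J' = - (J * mat_adjoint P)" unfolding m2' by (rule M4bg[OF cP cJ aJ cJ' JJ2 aJ'])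
  have cmR: "cm R \<in> carrier_mat (2*K) K" using cR by simp
  have cmQ: "- cm Q \<in> carrier_mat (2*K) K" using cQ by simp
  define u where "u = H *\<^sub>v v"
  have cu: "u \<in> carrier_vec (2*K)" unfolding u_def using cH vK by simp
  have cJv: "J *\<^sub>v v \<in> carrier_vec K" using cJ vK by simp
  have cw2: "s \<cdot>\<^sub>v (J *\<^sub>v v) \<in> carrier_vec K" using cJv by simp
  have uexp: "u = P *\<^sub>v v + s \<cdot>\<^sub>v (F2 *\<^sub>v v)"
  proof -
    have "u = P *\<^sub>v v + (s \<cdot>\<^sub>m F2) *\<^sub>v v" unfolding u_def hH
      by (rule add_mult_distrib_mat_vec[OF cP _ vK]) (use cF2 in simp)
    also have "(s \<cdot>\<^sub>m F2) *\<^sub>v v = s \<cdot>\<^sub>v (F2 *\<^sub>v v)" using cF2 vK by (simp add: smult_mat_vec)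
    finally show ?thesis .
  qed
  have e1: "P *\<^sub>v v + S *\<^sub>v (s \<cdot>\<^sub>v (J *\<^sub>v v)) = u"
  proof -
    have "S *\<^sub>v (s \<cdot>\<^sub>v (J *\<^sub>v v)) = s \<cdot>\<^sub>v (S *\<^sub>v (J *\<^sub>v v))" by (rule mult_mat_vec[OF cS cJv])
    also have "S *\<^sub>v (J *\<^sub>v v) = (S * J) *\<^sub>v v" using cS cJ vK by simp
    finally have a: "S *\<^sub>v (s \<cdot>\<^sub>v (J *\<^sub>v v)) = s \<cdot>\<^sub>v (F2 *\<^sub>v v)" unfolding m1 .
    show ?thesis unfolding a uexp ..
  qed
  have cPv: "P *\<^sub>v v \<in> carrier_vec (2*K)" using cP vK by simp
  have cF2v: "F2 *\<^sub>v v \<in> carrier_vec (2*K)" using cF2 vK by simp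
  have e2: "cm R *\<^sub>v v + (- cm Q) *\<^sub>v (s \<cdot>\<^sub>v (J *\<^sub>v v)) = (- s) \<cdot>\<^sub>v (J' *\<^sub>v u)"
  proof -
    have "(- cm Q) *\<^sub>v (s \<cdot>\<^sub>v (J *\<^sub>v v)) = s \<cdot>\<^sub>v ((- cm Q) *\<^sub>v (J *\<^sub>v v))" by (rule mult_mat_vec[OF cmQ cJv])
    also have "(- cm Q) *\<^sub>v (J *\<^sub>v v) = ((- cm Q) * J) *\<^sub>v v" using cmQ cJ vK by simp
    also have "\<dots> = - (J' *\<^sub>v (P *\<^sub>v v))" unfolding m2 using cJ' cP vK by simp
    finally have a: "(- cm Q) *\<^sub>v (s \<cdot>\<^sub>v (J *\<^sub>v v)) = s \<cdot>\<^sub>v (- (J' *\<^sub>v (P *\<^sub>v v)))" .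
    have b: "cm R *\<^sub>v v = - (J' *\<^sub>v (F2 *\<^sub>v v))" unfolding fB using cJ' cF2 vK by simp
    have "J' *\<^sub>v u = J' *\<^sub>v (P *\<^sub>v v) + J' *\<^sub>v (s \<cdot>\<^sub>v (F2 *\<^sub>v v))" unfolding uexp
      by (rule mult_add_distrib_mat_vec[OF cJ' cPv]) (use cF2v in simp)
    also have "J' *\<^sub>v (s \<cdot>\<^sub>v (F2 *\<^sub>v v)) = s \<cdot>\<^sub>v (J' *\<^sub>v (F2 *\<^sub>v v))" by (rule mult_mat_vec[OF cJ' cF2v])
    finally have c: "J' *\<^sub>v u = J' *\<^sub>v (P *\<^sub>v v) + s \<cdot>\<^sub>v (J' *\<^sub>v (F2 *\<^sub>v v))" .
    have ca: "J' *\<^sub>v (P *\<^sub>v v) \<in> carrier_vec (2*K)" using cJ' cPv by simp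
    have cb: "J' *\<^sub>v (F2 *\<^sub>v v) \<in> carrier_vec (2*K)" using cJ' cF2v by simp
    show ?thesis unfolding a b c by (rule vlem1[OF ca cb sig(2)])
  qed
  define z where "z = (- s) \<cdot>\<^sub>v (J' *\<^sub>v u)"
  have cz: "z \<in> carrier_vec (2*K)" unfolding z_def using cJ' cu by simp
  have Ew: "four_block_mat P S (cm R) (- cm Q) *\<^sub>v (v @\<^sub>v (s \<cdot>\<^sub>v (J *\<^sub>v v))) = u @\<^sub>v z"
    unfolding four_block_mat_mult_vec[OF cP cS cmR cmQ vK cw2] e1 e2 z_def ..
  have adjE: "mat_adjoint (four_block_mat P S (cm R) (- cm Q)) =
     four_block_mat (mat_adjoint P) (mat_adjoint (cm R)) (mat_adjoint S) (mat_adjoint (- cm Q))"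
    by (rule adj_four[OF cP cS cmR cmQ])
  have caP: "mat_adjoint P \<in> carrier_mat K (2*K)" using cP by simp
  have caR: "mat_adjoint (cm R) \<in> carrier_mat K (2*K)" using cmR by simp
  have caS: "mat_adjoint S \<in> carrier_mat K (2*K)" using cS by simp
  have caQ: "mat_adjoint (- cm Q) \<in> carrier_mat K (2*K)" using cmQ by simp
  have caF2: "mat_adjoint F2 \<in> carrier_mat K (2*K)" using cF2 by simp
  have cPu: "mat_adjoint P *\<^sub>v u \<in> carrier_vec K" using caP cu by simp
  have cF2u: "mat_adjoint F2 *\<^sub>v u \<in> carrier_vec K" using caF2 cu by simp
  have Hfold: "H = E1 (Suc m) (lo (2^(Suc m + 1)) g + s \<cdot>\<^sub>v rho (2^(m+1)) (hi (2^(Suc m + 1)) g))"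
    unfolding H_def g1_def g2_def K_def ..
  have adjH: "mat_adjoint H = mat_adjoint P + s \<cdot>\<^sub>m mat_adjoint F2"
    unfolding hH using cP cF2 by (simp add: adj_add[of _ "2*K" K] adj_smult sig(1))
  have lamv: "mat_adjoint H *\<^sub>v u = lam \<cdot>\<^sub>v v"
    using ev unfolding Hfold[symmetric] u_def using cH vK by simp
  have adjHu: "mat_adjoint H *\<^sub>v u = mat_adjoint P *\<^sub>v u + s \<cdot>\<^sub>v (mat_adjoint F2 *\<^sub>v u)"
  proof -
    have "mat_adjoint H *\<^sub>v u = mat_adjoint P *\<^sub>v u + (s \<cdot>\<^sub>m mat_adjoint F2) *\<^sub>v u"
      unfolding adjH by (rule add_mult_distrib_mat_vec[OF caP _ cu]) (use caF2 in simp)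
    also have "(s \<cdot>\<^sub>m mat_adjoint F2) *\<^sub>v u = s \<cdot>\<^sub>v (mat_adjoint F2 *\<^sub>v u)" using caF2 cu by (simp add: smult_mat_vec)
    finally show ?thesis .
  qed
  have t1: "mat_adjoint P *\<^sub>v u + mat_adjoint (cm R) *\<^sub>v z = lam \<cdot>\<^sub>v v"
  proof -
    have "mat_adjoint (cm R) *\<^sub>v z = (- s) \<cdot>\<^sub>v (mat_adjoint (cm R) *\<^sub>v (J' *\<^sub>v u))"
      unfolding z_def by (rule mult_mat_vec[OF caR]) (use cJ' cu in simp)
    also have "mat_adjoint (cm R) *\<^sub>v (J' *\<^sub>v u) = (mat_adjoint (cm R) * J') *\<^sub>v u" using caR cJ' cu by simp
    also have "\<dots> = - (mat_adjoint F2 *\<^sub>v u)" unfolding m3 using caF2 cu by simp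
    finally have a: "mat_adjoint (cm R) *\<^sub>v z = (- s) \<cdot>\<^sub>v (- (mat_adjoint F2 *\<^sub>v u))" .
    show ?thesis unfolding a lamv[symmetric] adjHu by (rule vlem2[OF cPu cF2u])
  qed
  have t2: "mat_adjoint S *\<^sub>v u + mat_adjoint (- cm Q) *\<^sub>v z = lam \<cdot>\<^sub>v (s \<cdot>\<^sub>v (J *\<^sub>v v))"
  proof -
    have "mat_adjoint (- cm Q) *\<^sub>v z = (- s) \<cdot>\<^sub>v (mat_adjoint (- cm Q) *\<^sub>v (J' *\<^sub>v u))"
      unfolding z_def by (rule mult_mat_vec[OF caQ]) (use cJ' cu in simp)
    also have "mat_adjoint (- cm Q) *\<^sub>v (J' *\<^sub>v u) = (mat_adjoint (- cm Q) * J') *\<^sub>v u" using caQ cJ' cu by simp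
    also have "\<dots> = - (J *\<^sub>v (mat_adjoint P *\<^sub>v u))" unfolding m4b using cJ caP cu by simp
    finally have a: "mat_adjoint (- cm Q) *\<^sub>v z = (- s) \<cdot>\<^sub>v (- (J *\<^sub>v (mat_adjoint P *\<^sub>v u)))" .
    have b: "mat_adjoint S *\<^sub>v u = J *\<^sub>v (mat_adjoint F2 *\<^sub>v u)" unfolding m4a using cJ caF2 cu by simp
    have y1: "J *\<^sub>v (mat_adjoint F2 *\<^sub>v u) \<in> carrier_vec K" using cJ cF2u by simp
    have y2: "J *\<^sub>v (mat_adjoint P *\<^sub>v u) \<in> carrier_vec K" using cJ cPu by simp
    have "mat_adjoint S *\<^sub>v u + mat_adjoint (- cm Q) *\<^sub>v z
        = s \<cdot>\<^sub>v (J *\<^sub>v (mat_adjoint P *\<^sub>v u) + s \<cdot>\<^sub>v (J *\<^sub>v (mat_adjoint F2 *\<^sub>v u)))"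
      unfolding a b by (rule vlem3[OF y1 y2 sig(2)])
    also have "J *\<^sub>v (mat_adjoint P *\<^sub>v u) + s \<cdot>\<^sub>v (J *\<^sub>v (mat_adjoint F2 *\<^sub>v u))
        = J *\<^sub>v (mat_adjoint H *\<^sub>v u)"
      unfolding adjHu
      by (subst mult_add_distrib_mat_vec[OF cJ cPu], use cF2u in simp, subst mult_mat_vec[OF cJ cF2u], rule refl)
    also have "\<dots> = lam \<cdot>\<^sub>v (J *\<^sub>v v)" unfolding lamv by (rule mult_mat_vec[OF cJ vK])
    finally show ?thesis
      by (metis smult_smult_assoc mult.commute)
  qed
  have cE: "four_block_mat P S (cm R) (- cm Q) \<in> carrier_mat (2*K + 2*K) (K + K)"
    by (rule four_block_carrier_mat[OF cP cmQ])
  have caE: "mat_adjoint (four_block_mat P S (cm R) (- cm Q)) \<in> carrier_mat (K + K) (2*K + 2*K)"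
    using adj_carrier[THEN iffD2, OF cE] .
  have cw: "v @\<^sub>v (s \<cdot>\<^sub>v (J *\<^sub>v v)) \<in> carrier_vec (K + K)" using vK cw2 by (rule append_carrier_vec)
  have "(mat_adjoint (E1 (Suc (Suc m)) g) * E1 (Suc (Suc m)) g) *\<^sub>v (v @\<^sub>v (s \<cdot>\<^sub>v (J *\<^sub>v v)))
       = lam \<cdot>\<^sub>v (v @\<^sub>v (s \<cdot>\<^sub>v (J *\<^sub>v v)))"
    unfolding Eg
    apply (subst assoc_mult_mat_vec[OF caE cE cw])
    unfolding Ew adjE
    apply (subst four_block_mat_mult_vec[OF caP caR caS caQ cu cz])
    unfolding t1 t2 smult_append ..
  then show ?thesis unfolding J_def .
qed


lemma T1_eq: "T1 (2^(n+1)) h = mat_adjoint (E1 n h) * E1 n h"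
proof -
  have "(THE k. (2::nat)^(n+1) = 2^(k+1)) = n"
    by (rule the_equality) (simp_all add: power_inject_exp)
  then show ?thesis unfolding T1_def Ecal1_def E1_def by simp
qed

lemma T1_carrier: "T1 (2^(n+1)) h \<in> carrier_mat (2^n) (2^n)"
  unfolding T1_eq by (rule mult_carrier_mat[OF adj_carrier[THEN iffD2, OF E1_carrier] E1_carrier])

lemma eig_scale: assumes A: "A \<in> carrier_mat n n" and w: "w \<in> carrier_vec n" and nz: "w \<noteq> 0\<^sub>v n"
  and Aw: "A *\<^sub>v w = c \<cdot>\<^sub>v w" and k: "(k::complex) \<noteq> 0"
  shows "eigenvector A (k \<cdot>\<^sub>v w) c"
proof -
  have "k \<cdot>\<^sub>v w \<noteq> 0\<^sub>v n"
  proof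
    assume z: "k \<cdot>\<^sub>v w = 0\<^sub>v n"
    have "w = 0\<^sub>v n"
    proof (rule eq_vecI)
      fix i assume "i < dim_vec (0\<^sub>v n :: complex vec)"
      then have i: "i < n" by simp
      have "(k \<cdot>\<^sub>v w) $ i = 0" using z i by simp
      then have "k * w $ i = 0" using w i by simp
      then show "w $ i = 0\<^sub>v n $ i" using k i by simp
    qed (use w in simp)
    with nz show False ..
  qed
  moreover have "A *\<^sub>v (k \<cdot>\<^sub>v w) = c \<cdot>\<^sub>v (k \<cdot>\<^sub>v w)"
    unfolding mult_mat_vec[OF A w] Aw by (simp add: smult_smult_assoc mult.commute)
  ultimately show ?thesis unfolding eigenvector_def using A w by simp
qed

lemma append_assoc_vec: "(a @\<^sub>v b) @\<^sub>v c = a @\<^sub>v (b @\<^sub>v (c :: complex vec))"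
  by (rule eq_vecI) auto

lemma zero_mat_vec: "v \<in> carrier_vec k \<Longrightarrow> 0\<^sub>m n k *\<^sub>v v = (0\<^sub>v n :: complex vec)"
  by (rule eq_vecI) (auto simp: scalar_prod_def)

lemma J_app: assumes "a \<in> carrier_vec k" "b \<in> carrier_vec k"
  shows "Jm k *\<^sub>v (a @\<^sub>v b) = b @\<^sub>v (- a)"
  unfolding Jm_def
  apply (subst four_block_mat_mult_vec[OF zero_carrier_mat one_carrier_mat uminus_carrier_mat[OF one_carrier_mat] zero_carrier_mat assms])
  using assms by (simp add: zero_mat_vec)

lemma app_nz: assumes "v \<in> carrier_vec n" "v \<noteq> 0\<^sub>v n" "x \<in> carrier_vec n'"
  shows "v @\<^sub>v x \<noteq> 0\<^sub>v (n + n')"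
proof
  assume z: "v @\<^sub>v x = 0\<^sub>v (n + n')"
  have "v = 0\<^sub>v n"
  proof (rule eq_vecI)
    fix i assume "i < dim_vec (0\<^sub>v n :: 'a vec)"
    then have i: "i < n" by simp
    have "(v @\<^sub>v x) $ i = 0" using z i by simp
    then show "v $ i = 0\<^sub>v n $ i" using assms i by simp
  qed (use assms in simp)
  with assms(2) show False ..
qed

theorem proposition5:
  fixes M m :: nat and a b :: "complex vec"
  assumes M: "M = 2 ^ m"
    and a: "a \<in> carrier_vec M" and b: "b \<in> carrier_vec M"
    and nz: "a @\<^sub>v b \<noteq> 0\<^sub>v (2 * M)"
    and eig: "\<forall>h \<in> carrier_vec (4 * M). \<exists>c. eigenvector (T1 (4 * M) h) (a @\<^sub>v b) c"
  shows "\<forall>g \<in> carrier_vec (8 * M).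
           (\<exists>c. eigenvector (T1 (8 * M) g)
                  ((1 / complex_of_real (sqrt 2)) \<cdot>\<^sub>v (a @\<^sub>v b @\<^sub>v b @\<^sub>v - a)) c) \<and>
           (\<exists>c. eigenvector (T1 (8 * M) g)
                  ((1 / complex_of_real (sqrt 2)) \<cdot>\<^sub>v (a @\<^sub>v b @\<^sub>v - b @\<^sub>v a)) c)"
proof (intro ballI conjI)
  fix g :: "complex vec" assume g: "g \<in> carrier_vec (8 * M)"
  have e4: "4 * M = 2^(Suc m + 1)" and e8: "8 * M = 2^(Suc (Suc m) + 1)" and e2: "2 * M = 2^(m+1)"
    using M by simp_all
  define v where "v = a @\<^sub>v b"
  have v: "v \<in> carrier_vec (2^(m+1))" unfolding v_def e2[symmetric] mult_2 using a b by simp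
  have vnz: "v \<noteq> 0\<^sub>v (2^(m+1))" using nz unfolding v_def e2 .
  have Jv: "Jm (2^m) *\<^sub>v v = b @\<^sub>v (- a)" unfolding v_def by (rule J_app) (use a b M in simp_all)
  have kz: "1 / complex_of_real (sqrt 2) \<noteq> 0" by simp
  have cT: "T1 (8 * M) g \<in> carrier_mat (2^(Suc (Suc m))) (2^(Suc (Suc m)))" unfolding e8 by (rule T1_carrier)
  have cx: "s \<cdot>\<^sub>v (Jm (2^m) *\<^sub>v v) \<in> carrier_vec (2^(m+1))" for s
  proof -
    have v': "v \<in> carrier_vec (2 * 2^m)" using v by simp
    have "Jm (2^m) *\<^sub>v v \<in> carrier_vec (2 * 2^m)" by (rule mult_mat_vec_carrier[OF Jm_carrier v'])
    then show ?thesis by simp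
  qed
  have wc: "v @\<^sub>v (s \<cdot>\<^sub>v (Jm (2^m) *\<^sub>v v)) \<in> carrier_vec (2^(Suc (Suc m)))" for s
    using append_carrier_vec[OF v cx[of s]] by (simp add: mult_2[symmetric])
  have wnz: "v @\<^sub>v (s \<cdot>\<^sub>v (Jm (2^m) *\<^sub>v v)) \<noteq> 0\<^sub>v (2^(Suc (Suc m)))" for s
    using app_nz[OF v vnz cx[of s]] by (simp add: mult_2[symmetric])
  have main: "\<exists>c. eigenvector (T1 (8 * M) g) ((1 / complex_of_real (sqrt 2)) \<cdot>\<^sub>v (v @\<^sub>v (s \<cdot>\<^sub>v (Jm (2^m) *\<^sub>v v)))) c"
    if sig: "cnj s = s" "s * s = 1" for s
  proof -
    define h where "h = lo (2^(Suc m + 1)) g + s \<cdot>\<^sub>v rho (2^(m+1)) (hi (2^(Suc m + 1)) g)"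
    have r1: "rho (2^(m+1)) (hi (2^(Suc m + 1)) g) \<in> carrier_vec (2 * 2^(m+1))" by (rule rho_carrier)
    have r2: "(2 * 2^(m+1)) = (2::nat)^(Suc m + 1)" by simp
    have hc: "h \<in> carrier_vec (4 * M)" unfolding h_def e4
      by (rule add_carrier_vec[OF lo_carrier]) (use r1 r2 in simp)
    obtain c where c: "eigenvector (T1 (4 * M) h) (a @\<^sub>v b) c" using eig hc by blast
    have ev: "(mat_adjoint (E1 (Suc m) h) * E1 (Suc m) h) *\<^sub>v v = c \<cdot>\<^sub>v v"
      using c unfolding eigenvector_def e4 T1_eq v_def by blast
    have "T1 (8 * M) g *\<^sub>v (v @\<^sub>v (s \<cdot>\<^sub>v (Jm (2^m) *\<^sub>v v))) = c \<cdot>\<^sub>v (v @\<^sub>v (s \<cdot>\<^sub>v (Jm (2^m) *\<^sub>v v)))"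
      unfolding e8 T1_eq by (rule core[OF v sig ev[unfolded h_def]])
    then show ?thesis using eig_scale[OF cT wc wnz _ kz] by blast
  qed
  have w1: "v @\<^sub>v (1 \<cdot>\<^sub>v (Jm (2^m) *\<^sub>v v)) = a @\<^sub>v b @\<^sub>v b @\<^sub>v - a"
    unfolding Jv by (simp add: v_def append_assoc_vec)
  have w2: "v @\<^sub>v ((-1) \<cdot>\<^sub>v (Jm (2^m) *\<^sub>v v)) = a @\<^sub>v b @\<^sub>v - b @\<^sub>v a"
  proof -
    have "(-1) \<cdot>\<^sub>v (b @\<^sub>v (- a)) = (- b) @\<^sub>v a"
      by (rule eq_vecI) auto
    then show ?thesis unfolding Jv by (simp add: v_def append_assoc_vec)
  qed
  show "\<exists>c. eigenvector (T1 (8 * M) g) ((1 / complex_of_real (sqrt 2)) \<cdot>\<^sub>v (a @\<^sub>v b @\<^sub>v b @\<^sub>v - a)) c"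
    using main[of 1] unfolding w1 by simp
  show "\<exists>c. eigenvector (T1 (8 * M) g) ((1 / complex_of_real (sqrt 2)) \<cdot>\<^sub>v (a @\<^sub>v b @\<^sub>v - b @\<^sub>v a)) c"
    using main[of "-1"] unfolding w2 by simp
qed

end
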